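(* Fix $D\ge1$, $\bar L\ge1$, a law $P_L$ on $\{1,\dots,\bar L\}$, $\Delta\ge0$, measurable weight functions $g_\nu$ as below, fixed vectors $k^*,v^*\in\mathbb R^D$, and a measurable activation $\sigma$ mapping each $\mathbb R^L$ ($1\le L\le\bar L$) to $\mathbb R^L$. Generate $(L,\epsilon^*,X,y)$ by: $L\sim P_L$; $\epsilon^*\sim\mathrm{Unif}(\{1,\dots,L\})$ given $L$; $X\in\mathbb R^{L\times D}$ with density $g_\nu(\epsilon^*,\frac1{\sqrt D}xk^* )\prod_{\ell=1}^L\mathcal N(x_\ell;0,I_D)$ given $(L,\epsilon^* )$; $y=\frac1{\sqrt D}X_{\epsilon^*}v^*+\Delta\xi$ with $\xi\sim\mathcal N(0,1)$ independent. For $k,v\in\mathbb R^D$ let $f_{\sigma,k,v}(X)=\sigma(\frac1{\sqrt D}Xk)^\top\frac1{\sqrt D}Xv$ and $\mathcal E_\sigma(k,v)=\mathbb E[(y-f_{\sigma,k,v}(X))^2]$ (expectation over $(L,\epsilon^*,X,\xi)$ with $k^*,v^*$ fixed), assumed finite for all $k,v$. Then there exists a function $\tilde{\mathcal E}_\sigma:\mathbb R^7\to\mathbb R$ such that for all $(k,v)\in(\mathbb R^D)^2$, $$\mathcal E_\sigma(k,v)=\tilde{\mathcal E}_\sigma(m_{kk^*},m_{vv^*},m_{kv^*},m_{vk^*},q_{kk},q_{vv},q_{vk}),$$ where $m_{kk^*}=\frac1Dk^\top k^*$, $m_{vv^*}=\frac1Dv^\top v^*$, $m_{kv^*}=\frac1Dk^\top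 v^*$, $m_{vk^*}=\frac1Dv^\top k^*$, $q_{kk}=\frac1Dk^\top k$, $q_{vv}=\frac1Dv^\top v$, $q_{vk}=\frac1Dk^\top v$.
   Context: The weight functions $g_\nu:\{1,\dots,L\}\times\mathbb R^L\to[0,\infty)$ are such that the displayed expression is a probability density in $x\in\mathbb R^{L\times D}$. $\mathcal N(x;\omega,V)$ is the Gaussian density with mean $\omega$ and covariance $V$. *)

theory Defs
  imports "HOL-Probability.Probability"
begin

text \<open>Dimension D = CARD('d); rows of X are vectors in real^'d; X is indexed by rows 1..L.\<close>

definition gauss_vec :: "real^'d \<Rightarrow> real" where
  "gauss_vec x = (2 * pi) powr (- real CARD('d) / 2) * exp (- (norm x)\<^sup>2 / 2)"

definition proj :: "nat \<Rightarrow> (nat \<Rightarrow> real^'d) \<Rightarrow> real^'d \<Rightarrow> (nat \<Rightarrow> real)" where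
  "proj L X w = (\<lambda>l\<in>{1..L}. (X l \<bullet> w) / sqrt (real CARD('d)))"

definition attn :: "(nat \<Rightarrow> (nat \<Rightarrow> real) \<Rightarrow> (nat \<Rightarrow> real)) \<Rightarrow> nat \<Rightarrow> (nat \<Rightarrow> real^'d)
    \<Rightarrow> real^'d \<Rightarrow> real^'d \<Rightarrow> real" where
  "attn \<sigma> L X k v = (\<Sum>l\<in>{1..L}. \<sigma> L (proj L X k) l * proj L X v l)"

definition dens_X :: "(nat \<Rightarrow> nat \<Rightarrow> (nat \<Rightarrow> real) \<Rightarrow> real) \<Rightarrow> real^'d \<Rightarrow> nat \<Rightarrow> nat
    \<Rightarrow> (nat \<Rightarrow> real^'d) \<Rightarrow> real" where
  "dens_X g kstar L eps X = g L eps (proj L X kstar) * (\<Prod>l\<in>{1..L}. gauss_vec (X l))"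

text \<open>Nonnegative integrand,
  so the expectation is the nonnegative integral.\<close>
definition risk :: "nat pmf \<Rightarrow> (nat \<Rightarrow> nat \<Rightarrow> (nat \<Rightarrow> real) \<Rightarrow> real)
    \<Rightarrow> (nat \<Rightarrow> (nat \<Rightarrow> real) \<Rightarrow> (nat \<Rightarrow> real)) \<Rightarrow> real \<Rightarrow> real^'d \<Rightarrow> real^'d
    \<Rightarrow> real^'d \<Rightarrow> real^'d \<Rightarrow> ennreal" where
  "risk PL g \<sigma> \<Delta> kstar vstar k v =
     (\<integral>\<^sup>+ L. (\<Sum>eps\<in>{1..L}. ennreal (1 / real L) *
        (\<integral>\<^sup>+ X. (\<integral>\<^sup>+ \<xi>.
            ennreal (dens_X g kstar L eps X * normal_density 0 1 \<xi>) *
            ennreal ((proj L X vstar eps + \<Delta> * \<xi> - attn \<sigma> L X k v)\<^sup>2)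
          \<partial>lborel) \<partial>(PiM {1..L} (\<lambda>_. (lborel :: (real^'d) measure)))))
      \<partial>measure_pmf PL)"

end

theory Submission
  imports Defs
begin


typedef 'a wo = "UNIV :: 'a set" by auto

instance wo :: (finite) finite
proof
  have "(UNIV :: 'a wo set) = Abs_wo ` UNIV"
    by (metis Rep_wo_inverse surj_def)
  show "finite (UNIV :: 'a wo set)" unfolding \<open>UNIV = _\<close> by (rule finite_imageI) simp
qed

instantiation wo :: (finite) linorder
begin
definition less_eq_wo_def: "x \<le> y \<longleftrightarrow> to_nat (Rep_wo x) \<le> to_nat (Rep_wo y)"
definition less_wo_def: "x < y \<longleftrightarrow> to_nat (Rep_wo x) < to_nat (Rep_wo y)"
instance
proof
  fix x y z :: "'a wo"
  show "(x < y) = (x \<le> y \<and> \<not> y \<le> x)" by (auto simp: less_eq_wo_def less_wo_def)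
  show "x \<le> x" by (simp add: less_eq_wo_def)
  show "x \<le> y \<Longrightarrow> y \<le> z \<Longrightarrow> x \<le> z" by (simp add: less_eq_wo_def)
  show "x \<le> y \<Longrightarrow> y \<le> x \<Longrightarrow> x = y"
    by (simp add: less_eq_wo_def Rep_wo_inject[symmetric])
  show "x \<le> y \<or> y \<le> x" by (auto simp: less_eq_wo_def)
qed
end

instance wo :: (finite) wellorder
proof
  fix P :: "'a wo \<Rightarrow> bool" and a
  assume H: "\<And>x. (\<And>y. y < x \<Longrightarrow> P y) \<Longrightarrow> P x"
  show "P a"
    by (induct a rule: measure_induct_rule[of "\<lambda>x. to_nat (Rep_wo x)"]) (rule H, simp add: less_wo_def)
qed

lemma prod_Basis_cart: "(\<Prod>b\<in>Basis. (x::real^'n) \<bullet> b) = (\<Prod>i\<in>UNIV. x$i)"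
  by (simp add: Basis_vec_def cart_eq_inner_axis axis_eq_axis prod.UNION_disjoint)

definition Phi :: "real^'a \<Rightarrow> real^('a wo)" where "Phi x = (\<chi> i. x $ Rep_wo i)"
definition Psi :: "real^('a wo) \<Rightarrow> real^'a" where "Psi y = (\<chi> j. y $ Abs_wo j)"

lemma Psi_Phi[simp]: "Psi (Phi x) = x" by (simp add: Psi_def Phi_def Abs_wo_inverse)
lemma Phi_Psi[simp]: "Phi (Psi y) = y" by (simp add: Psi_def Phi_def Rep_wo_inverse)

lemma linear_Phi: "linear Phi"
  by (auto intro!: linearI simp: Phi_def vec_eq_iff)
lemma linear_Psi: "linear Psi"
  by (auto intro!: linearI simp: Psi_def vec_eq_iff)
lemma Phi_meas[measurable]: "Phi \<in> borel_measurable borel"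
  using linear_Phi by (intro borel_measurable_continuous_onI linear_continuous_on linear_conv_bounded_linear[THEN iffD1])
lemma Psi_meas[measurable]: "Psi \<in> borel_measurable borel"
  using linear_Psi by (intro borel_measurable_continuous_onI linear_continuous_on linear_conv_bounded_linear[THEN iffD1])

lemma bij_Rep_wo: "bij_betw Rep_wo UNIV UNIV"
  by (metis bij_betwI' Rep_wo_inject Rep_wo_cases UNIV_I)

lemma prod_wo: "(\<Prod>i\<in>UNIV. f (Rep_wo i)) = (\<Prod>j\<in>(UNIV::'a::finite set). (f j :: real))"
  by (rule prod.reindex_bij_betw) (metis bij_betwI' Rep_wo_inject Rep_wo_cases UNIV_I)

lemma distr_Phi: "distr lborel borel (Phi :: real^'a::finite \<Rightarrow> _) = lborel"
proof (rule lborel_eqI[symmetric])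
  fix l u :: "real^'a wo"
  assume le: "\<And>b. b \<in> Basis \<Longrightarrow> l \<bullet> b \<le> u \<bullet> b"
  have lei: "l $ i \<le> u $ i" for i
    using le[of "axis i 1"] by (auto simp: Basis_vec_def cart_eq_inner_axis)
  have le': "\<forall>b\<in>Basis. Psi l \<bullet> b \<le> Psi u \<bullet> b"
    using lei by (auto simp: Basis_vec_def inner_axis Psi_def)
  have "Phi -` box l u = box (Psi l) (Psi u)"
    apply (auto simp: mem_box_cart Phi_def Psi_def)
    by (metis Abs_wo_inverse Rep_wo_inverse UNIV_I)+
  then have "emeasure (distr lborel borel Phi) (box l u) = emeasure lborel (box (Psi l) (Psi u))"
    by (simp add: emeasure_distr)
  also have "\<dots> = (\<Prod>b\<in>Basis. (Psi u - Psi l) \<bullet> b)"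
    using le' by (simp add: emeasure_lborel_box_eq)
  also have "\<dots> = (\<Prod>b\<in>Basis. (u - l) \<bullet> b)"
    unfolding prod_Basis_cart by (simp add: Psi_def prod_wo[of "\<lambda>j. u $ Abs_wo j - l $ Abs_wo j", symmetric] Rep_wo_inverse)
  finally show "emeasure (distr lborel borel Phi) (box l u) = (\<Prod>b\<in>Basis. (u - l) \<bullet> b)" .
qed simp


lemma orth_meas: "orthogonal_transformation (Q :: 'a::euclidean_space \<Rightarrow> 'a) \<Longrightarrow> Q \<in> borel_measurable borel"
  by (intro borel_measurable_continuous_onI linear_continuous_on linear_conv_bounded_linear[THEN iffD1] orthogonal_transformation_linear)

lemma distr_orth_wo:
  fixes Q :: "real^'n::{finite,wellorder} \<Rightarrow> real^'n::_"
  assumes Q: "orthogonal_transformation Q"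
  shows "distr lborel borel Q = lborel"
proof (rule lborel_eqI[symmetric])
  fix l u :: "(real, 'n) vec"
  assume le: "\<And>b. b \<in> Basis \<Longrightarrow> l \<bullet> b \<le> u \<bullet> b"
  have Qm: "Q \<in> borel_measurable borel" by (rule orth_meas[OF Q])
  define Qi where "Qi = inv Q"
  have Qi: "orthogonal_transformation Qi" using Q orthogonal_transformation_inv Qi_def by blast
  have pre: "Q -` box l u = Qi ` box l u"
    using orthogonal_transformation_bij[OF Q] unfolding Qi_def
    by (simp add: bij_vimage_eq_inv_image)
  have Bs: "Q -` box l u \<in> sets borel" using Qm by (auto simp: measurable_def)
  have Bl: "box l u \<in> lmeasurable" by simp
  have "emeasure (distr lborel borel Q) (box l u) = emeasure lborel (Q -` box l u)"
    using Qm by (simp add: emeasure_distr)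
  also have "\<dots> = emeasure lebesgue (Q -` box l u)"
    using Bs by (simp add: emeasure_completion)
  also have "\<dots> = ennreal (measure lebesgue (Qi ` box l u))"
    unfolding pre using measurable_orthogonal_image[OF Qi Bl] by (simp add: emeasure_eq_measure2)
  also have "\<dots> = ennreal (measure lebesgue (box l u))"
    using measure_orthogonal_image[OF Qi Bl] by simp
  also have "\<dots> = emeasure lebesgue (box l u)"
    using Bl by (simp add: emeasure_eq_measure2)
  also have "\<dots> = emeasure lborel (box l u)"
    by (simp add: emeasure_completion)
  also have "\<dots> = (\<Prod>b\<in>Basis. (u - l) \<bullet> b)"
    using le by (simp add: emeasure_lborel_box_eq)
  finally show "emeasure (distr lborel borel Q) (box l u) = (\<Prod>b\<in>Basis. (u - l) \<bullet> b)" .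
qed simp

lemma distr_Psi: "distr lborel borel (Psi :: _ \<Rightarrow> real^'a::finite) = lborel"
proof -
  have "distr lborel borel (Psi :: _ \<Rightarrow> real^'a::finite) = distr (distr lborel borel Phi) borel Psi"
    by (simp add: distr_Phi)
  also have "\<dots> = distr lborel borel (Psi \<circ> Phi)"
    by (subst distr_distr) auto
  also have "\<dots> = distr lborel borel (\<lambda>x. x)" by (simp add: o_def)
  also have "\<dots> = lborel" by (rule distr_id2) simp
  finally show ?thesis .
qed

lemma inner_Phi: "Phi x \<bullet> Phi y = x \<bullet> y"
  unfolding inner_vec_def Phi_def using sum.reindex_bij_betw[OF bij_Rep_wo, of "\<lambda>j. x $ j \<bullet> y $ j"] by simp

lemma inner_Psi: "Psi x \<bullet> Psi y = x \<bullet> y"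
  by (metis inner_Phi Phi_Psi)

lemma distr_orth:
  fixes Q :: "real^'d::finite \<Rightarrow> real^'d"
  assumes Q: "orthogonal_transformation Q"
  shows "distr lborel borel Q = lborel"
proof -
  define Q' where "Q' = Phi \<circ> Q \<circ> Psi"
  have Q': "orthogonal_transformation Q'"
    unfolding orthogonal_transformation_def Q'_def
    using Q linear_Phi linear_Psi
    by (auto simp: orthogonal_transformation_def inner_Phi inner_Psi intro: linear_compose)
  have QQ: "Q = Psi \<circ> Q' \<circ> Phi" by (auto simp: Q'_def fun_eq_iff)
  have [measurable]: "Q' \<in> borel_measurable borel" by (rule orth_meas[OF Q'])
  have "distr lborel borel Q = distr (distr (distr lborel borel Phi) borel Q') borel Psi"
    unfolding QQ by (subst distr_distr, simp, simp)+ (simp add: o_assoc)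
  also have "\<dots> = lborel"
    by (simp add: distr_Phi distr_orth_wo[OF Q'] distr_Psi)
  finally show ?thesis .
qed



lemma distr_PiM_orth:
  fixes Q :: "real^'d::finite \<Rightarrow> real^'d"
  assumes Q: "orthogonal_transformation Q" and I: "finite I"
  shows "distr (PiM I (\<lambda>_. lborel)) (PiM I (\<lambda>_. lborel)) (\<lambda>X. \<lambda>l\<in>I. Q (X l)) = PiM I (\<lambda>_. lborel)"
proof -
  interpret product_sigma_finite "\<lambda>_. (lborel :: (real^'d) measure)" by standard
  have Qm[measurable]: "Q \<in> borel_measurable borel" by (rule orth_meas[OF Q])
  have Tm: "(\<lambda>X. \<lambda>l\<in>I. Q (X l)) \<in> measurable (PiM I (\<lambda>_. lborel)) (PiM I (\<lambda>_. (lborel :: (real^'d) measure)))"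
    by measurable
  show ?thesis
  proof (rule PiM_eqI)
    show "finite I" by fact
    show "sets (distr (PiM I (\<lambda>_. lborel)) (PiM I (\<lambda>_. lborel)) (\<lambda>X. \<lambda>l\<in>I. Q (X l))) = sets (PiM I (\<lambda>_. lborel))"
      by simp
    fix A assume A: "\<And>i. i \<in> I \<Longrightarrow> A i \<in> sets (lborel :: (real^'d) measure)"
    have AQ: "Q -` A i \<in> sets lborel" if "i \<in> I" for i
      using A[OF that] Qm by (auto simp: measurable_def)
    have pre: "(\<lambda>X. \<lambda>l\<in>I. Q (X l)) -` PiE I A \<inter> space (PiM I (\<lambda>_. lborel)) = PiE I (\<lambda>i. Q -` A i)"
      by (auto simp: space_PiM PiE_def Pi_def extensional_def)
    have "emeasure (distr (PiM I (\<lambda>_. lborel)) (PiM I (\<lambda>_. lborel)) (\<lambda>X. \<lambda>l\<in>I. Q (X l))) (PiE I A)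
        = emeasure (PiM I (\<lambda>_. lborel)) (PiE I (\<lambda>i. Q -` A i))"
      using A I by (subst emeasure_distr[OF Tm]) (auto simp: pre intro!: sets_PiM_I_finite)
    also have "\<dots> = (\<Prod>i\<in>I. emeasure lborel (Q -` A i))"
      using AQ I by (simp add: emeasure_PiM)
    also have "\<dots> = (\<Prod>i\<in>I. emeasure lborel (A i))"
    proof (rule prod.cong[OF refl])
      fix i assume "i \<in> I"
      have "emeasure lborel (A i) = emeasure (distr lborel borel Q) (A i)"
        by (simp add: distr_orth[OF Q])
      also have "\<dots> = emeasure lborel (Q -` A i)"
        using A[OF \<open>i \<in> I\<close>] by (simp add: emeasure_distr)
      finally show "emeasure lborel (Q -` A i) = emeasure lborel (A i)" by simp
    qed
    finally show "emeasure (distr (PiM I (\<lambda>_. lborel)) (PiM I (\<lambda>_. lborel)) (\<lambda>X. \<lambda>l\<in>I. Q (X l))) (PiE I A)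
        = (\<Prod>i\<in>I. emeasure lborel (A i))" .
  qed
qed



abbreviation PX :: "nat \<Rightarrow> (nat \<Rightarrow> real^'d::finite) measure" where
  "PX L \<equiv> PiM {1..L} (\<lambda>_. lborel)"

lemma proj_comp_meas:
  fixes w :: "real^'d::finite"
  shows "(\<lambda>X. proj L X w l) \<in> borel_measurable (PX L)"
proof -
  have "(\<lambda>X. proj L X w l) = (\<lambda>X. if l \<in> {1..L} then (X l \<bullet> w) / sqrt (real CARD('d)) else undefined)"
    by (auto simp: proj_def fun_eq_iff)
  moreover have "(\<lambda>X. if l \<in> {1..L} then ((X l :: real^'d) \<bullet> w) / sqrt (real CARD('d)) else undefined) \<in> borel_measurable (PX L)"
    by (cases "l \<in> {1..L}") auto
  ultimately show ?thesis by simp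
qed

lemma proj_meas:
  fixes w :: "real^'d::finite"
  shows "(\<lambda>X. proj L X w) \<in> measurable (PX L) (PiM {1..L} (\<lambda>_. (lborel :: real measure)))"
proof -
  have "(\<lambda>X. proj L X w) = (\<lambda>X. \<lambda>l\<in>{1..L}. proj L X w l)"
    by (auto simp: proj_def fun_eq_iff)
  moreover have "(\<lambda>X. \<lambda>l\<in>{1..L}. proj L X w l) \<in> measurable (PX L) (PiM {1..L} (\<lambda>_. (lborel :: real measure)))"
    by (rule measurable_restrict) (unfold measurable_lborel1, rule proj_comp_meas)
  ultimately show ?thesis by simp
qed

lemma attn_meas:
  fixes k v :: "real^'d::finite"
  assumes "\<And>l. l \<in> {1..L} \<Longrightarrow> (\<lambda>z. \<sigma> L z l) \<in> borel_measurable (PiM {1..L} (\<lambda>_. lborel))"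
  shows "(\<lambda>X. attn \<sigma> L X k v) \<in> borel_measurable (PX L)"
  unfolding attn_def
  by (intro borel_measurable_sum borel_measurable_times proj_comp_meas
      measurable_compose[OF proj_meas assms])

lemma dens_meas:
  fixes kstar :: "real^'d::finite"
  assumes "g L eps \<in> borel_measurable (PiM {1..L} (\<lambda>_. lborel))"
  shows "(\<lambda>X. dens_X g kstar L eps X) \<in> borel_measurable (PX L)"
  unfolding dens_X_def gauss_vec_def
  by (intro borel_measurable_times measurable_compose[OF proj_meas assms] borel_measurable_prod) measurable

lemma G_meas:
  fixes kstar vstar k v :: "real^'d::finite"
  assumes "g L eps \<in> borel_measurable (PiM {1..L} (\<lambda>_. lborel))"
    and "\<And>l. l \<in> {1..L} \<Longrightarrow> (\<lambda>z. \<sigma> L z l) \<in> borel_measurable (PiM {1..L} (\<lambda>_. lborel))"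
  shows "(\<lambda>X. \<integral>\<^sup>+ \<xi>. ennreal (dens_X g kstar L eps X * normal_density 0 1 \<xi>) *
            ennreal ((proj L X vstar eps + \<Delta> * \<xi> - attn \<sigma> L X k v)\<^sup>2) \<partial>lborel) \<in> borel_measurable (PX L)"
proof -
  note [measurable] = dens_meas[of g L eps kstar, OF assms(1)] attn_meas[of L \<sigma> k v, OF assms(2)] proj_comp_meas
  show ?thesis by measurable
qed



lemma refl_exists:
  fixes c b :: "'a::real_inner"
  assumes "norm c = norm b"
  obtains R where "orthogonal_transformation R" "R c = b" "\<And>w. w \<bullet> c = w \<bullet> b \<Longrightarrow> R w = w"
proof (cases "c = b")
  case True
  then show ?thesis using that[of "\<lambda>x. x"] by auto
next
  case False
  define u where "u = c - b"
  have uu: "u \<bullet> u \<noteq> 0" using False by (simp add: u_def)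
  define R where "R x = x - (2 * (x \<bullet> u) / (u \<bullet> u)) *\<^sub>R u" for x
  have cc: "c \<bullet> c = b \<bullet> b" using assms by (simp add: dot_square_norm)
  have lin: "linear R" unfolding R_def
    by (auto intro!: linearI simp: inner_add_left add_divide_distrib algebra_simps)
  have "R v \<bullet> R w = v \<bullet> w" for v w
    using uu by (simp add: R_def inner_diff_left inner_diff_right inner_commute field_simps power2_eq_square)
  then have ot: "orthogonal_transformation R" using lin by (simp add: orthogonal_transformation_def)
  have "u \<bullet> u = 2 * (c \<bullet> u)" using cc by (simp add: u_def inner_diff_left inner_diff_right inner_commute)
  then have "R c = b" using uu by (simp add: R_def u_def)
  moreover have "R w = w" if "w \<bullet> c = w \<bullet> b" for w
    using that by (simp add: R_def u_def inner_diff_right inner_commute inner_diff_left)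
  ultimately show ?thesis using that ot by blast
qed


lemma exists_Q:
  fixes a b k v k0 v0 :: "'a::real_inner"
  assumes "k0 \<bullet> a = k \<bullet> a" "k0 \<bullet> b = k \<bullet> b" "v0 \<bullet> a = v \<bullet> a" "v0 \<bullet> b = v \<bullet> b"
    "k0 \<bullet> k0 = k \<bullet> k" "v0 \<bullet> v0 = v \<bullet> v" "k0 \<bullet> v0 = k \<bullet> v"
  obtains Q where "orthogonal_transformation Q" "Q a = a" "Q b = b" "Q k0 = k" "Q v0 = v"
proof -
  have n1: "norm k0 = norm k" using assms(5) by (simp add: norm_eq_sqrt_inner)
  obtain R1 where R1: "orthogonal_transformation R1" "R1 k0 = k" "\<And>w. w \<bullet> k0 = w \<bullet> k \<Longrightarrow> R1 w = w"
    using refl_exists[OF n1] by blast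
  have R1a: "R1 a = a" "R1 b = b" using R1(3) assms(1,2) by (simp_all add: inner_commute)
  define c where "c = R1 v0"
  have "norm v0 = norm v" using assms(6) by (simp add: norm_eq_sqrt_inner)
  then have n2: "norm c = norm v" by (simp add: c_def orthogonal_transformation_norm[OF R1(1)])
  obtain R2 where R2: "orthogonal_transformation R2" "R2 c = v" "\<And>w. w \<bullet> c = w \<bullet> v \<Longrightarrow> R2 w = w"
    using refl_exists[OF n2] by blast
  have ip: "R1 x \<bullet> R1 y = x \<bullet> y" for x y using R1(1) by (simp add: orthogonal_transformation_def)
  have "a \<bullet> c = a \<bullet> v" using ip[of a v0] R1a assms(3) by (simp add: c_def inner_commute)
  hence R2a: "R2 a = a" using R2(3) by simp
  have "b \<bullet> c = b \<bullet> v" using ip[of b v0] R1a assms(4) by (simp add: c_def inner_commute)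
  hence R2b: "R2 b = b" using R2(3) by simp
  have "k \<bullet> c = k \<bullet> v" using ip[of k0 v0] R1(2) assms(7) by (simp add: c_def)
  hence R2k: "R2 k = k" using R2(3) by simp
  show ?thesis
    by (rule that[of "R2 \<circ> R1"]) (auto simp: orthogonal_transformation_compose R1 R2 R1a R2a R2b R2k c_def[symmetric])
qed

definition Gf :: "(nat \<Rightarrow> nat \<Rightarrow> (nat \<Rightarrow> real) \<Rightarrow> real) \<Rightarrow> (nat \<Rightarrow> (nat \<Rightarrow> real) \<Rightarrow> (nat \<Rightarrow> real))
   \<Rightarrow> real \<Rightarrow> real^'d::finite \<Rightarrow> real^'d \<Rightarrow> nat \<Rightarrow> nat \<Rightarrow> real^'d \<Rightarrow> real^'d \<Rightarrow> (nat \<Rightarrow> real^'d) \<Rightarrow> ennreal" where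
  "Gf g \<sigma> \<Delta> kstar vstar L eps k v X = (\<integral>\<^sup>+ \<xi>. ennreal (dens_X g kstar L eps X * normal_density 0 1 \<xi>) *
            ennreal ((proj L X vstar eps + \<Delta> * \<xi> - attn \<sigma> L X k v)\<^sup>2) \<partial>lborel)"

lemma risk_Gf: "risk PL g \<sigma> \<Delta> kstar vstar k v =
   (\<integral>\<^sup>+ L. (\<Sum>eps\<in>{1..L}. ennreal (1 / real L) * (\<integral>\<^sup>+ X. Gf g \<sigma> \<Delta> kstar vstar L eps k v X \<partial>PX L)) \<partial>measure_pmf PL)"
  by (simp add: risk_def Gf_def)

lemma inner_invariant:
  fixes kstar vstar k v :: "real^'d::finite"
  assumes Q: "orthogonal_transformation Q" and Qk: "Q kstar = kstar" and Qv: "Q vstar = vstar"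
    and gm: "g L eps \<in> borel_measurable (PiM {1..L} (\<lambda>_. lborel))"
    and sm: "\<And>l. l \<in> {1..L} \<Longrightarrow> (\<lambda>z. \<sigma> L z l) \<in> borel_measurable (PiM {1..L} (\<lambda>_. lborel))"
  shows "(\<integral>\<^sup>+ X. Gf g \<sigma> \<Delta> kstar vstar L eps (Q k) (Q v) X \<partial>PX L) = (\<integral>\<^sup>+ X. Gf g \<sigma> \<Delta> kstar vstar L eps k v X \<partial>PX L)"
proof -
  define T where "T = (\<lambda>(X :: nat \<Rightarrow> real^'d). \<lambda>l\<in>{1..L}. Q (X l))"
  have Qm[measurable]: "Q \<in> borel_measurable borel" by (rule orth_meas[OF Q])
  have Tm: "T \<in> measurable (PX L) (PX L)" unfolding T_def by measurable
  have projT: "proj L (T X) (Q w) = proj L X w" for X w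
    unfolding proj_def T_def using Q by (auto simp: orthogonal_transformation_def intro!: restrict_ext)
  have projk: "proj L (T X) kstar = proj L X kstar" for X using projT[of X kstar] Qk by simp
  have projv: "proj L (T X) vstar = proj L X vstar" for X using projT[of X vstar] Qv by simp
  have densT: "dens_X g kstar L eps (T X) = dens_X g kstar L eps X" for X
    unfolding dens_X_def projk using Q by (auto simp: gauss_vec_def T_def orthogonal_transformation_norm intro!: prod.cong)
  have attnT: "attn \<sigma> L (T X) (Q k) (Q v) = attn \<sigma> L X k v" for X
    by (simp add: attn_def projT)
  have GT: "Gf g \<sigma> \<Delta> kstar vstar L eps (Q k) (Q v) (T X) = Gf g \<sigma> \<Delta> kstar vstar L eps k v X" for X
    by (simp add: Gf_def densT projv attnT)
  have Gm: "Gf g \<sigma> \<Delta> kstar vstar L eps (Q k) (Q v) \<in> borel_measurable (PX L)"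
    unfolding Gf_def by (rule G_meas[where g=g and L=L and eps=eps and \<sigma>=\<sigma>, OF gm sm])
  have "(\<integral>\<^sup>+ X. Gf g \<sigma> \<Delta> kstar vstar L eps (Q k) (Q v) X \<partial>PX L)
      = (\<integral>\<^sup>+ X. Gf g \<sigma> \<Delta> kstar vstar L eps (Q k) (Q v) X \<partial>distr (PX L) (PX L) T)"
    by (simp add: T_def distr_PiM_orth[OF Q])
  also have "\<dots> = (\<integral>\<^sup>+ X. Gf g \<sigma> \<Delta> kstar vstar L eps (Q k) (Q v) (T X) \<partial>PX L)"
    using Gm by (subst nn_integral_distr[OF Tm]) auto
  also have "\<dots> = (\<integral>\<^sup>+ X. Gf g \<sigma> \<Delta> kstar vstar L eps k v X \<partial>PX L)"
    by (simp add: GT)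
  finally show ?thesis .
qed


lemma risk_invariant:
  fixes kstar vstar k v :: "real^'d::finite"
  assumes PL: "set_pmf PL \<subseteq> {1..Lbar}"
    and g_meas: "\<And>L eps. L \<in> {1..Lbar} \<Longrightarrow> eps \<in> {1..L} \<Longrightarrow>
        g L eps \<in> borel_measurable (PiM {1..L} (\<lambda>_. lborel))"
    and \<sigma>_meas: "\<And>L l. L \<in> {1..Lbar} \<Longrightarrow> l \<in> {1..L} \<Longrightarrow>
        (\<lambda>z. \<sigma> L z l) \<in> borel_measurable (PiM {1..L} (\<lambda>_. lborel))"
    and Q: "orthogonal_transformation Q" and Qk: "Q kstar = kstar" and Qv: "Q vstar = vstar"
  shows "risk PL g \<sigma> \<Delta> kstar vstar (Q k) (Q v) = risk PL g \<sigma> \<Delta> kstar vstar k v"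
  unfolding risk_Gf
proof (rule nn_integral_cong_AE)
  show "AE L in measure_pmf PL. (\<Sum>eps\<in>{1..L}. ennreal (1 / real L) * (\<integral>\<^sup>+ X. Gf g \<sigma> \<Delta> kstar vstar L eps (Q k) (Q v) X \<partial>PX L))
      = (\<Sum>eps\<in>{1..L}. ennreal (1 / real L) * (\<integral>\<^sup>+ X. Gf g \<sigma> \<Delta> kstar vstar L eps k v X \<partial>PX L))"
  proof (subst AE_measure_pmf_iff, intro ballI sum.cong refl)
    fix L eps assume L: "L \<in> set_pmf PL" and eps: "eps \<in> {1..L}"
    have L': "L \<in> {1..Lbar}" using L PL by auto
    show "ennreal (1 / real L) * (\<integral>\<^sup>+ X. Gf g \<sigma> \<Delta> kstar vstar L eps (Q k) (Q v) X \<partial>PX L)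
        = ennreal (1 / real L) * (\<integral>\<^sup>+ X. Gf g \<sigma> \<Delta> kstar vstar L eps k v X \<partial>PX L)"
      using inner_invariant[where g=g and L=L and eps=eps and \<sigma>=\<sigma> and k=k and v=v and \<Delta>=\<Delta>, OF Q Qk Qv g_meas[OF L' eps] \<sigma>_meas[OF L']] by simp
  qed
qed

theorem proposition3:
  fixes PL :: "nat pmf" and Lbar :: nat and \<Delta> :: real
    and g :: "nat \<Rightarrow> nat \<Rightarrow> (nat \<Rightarrow> real) \<Rightarrow> real"
    and \<sigma> :: "nat \<Rightarrow> (nat \<Rightarrow> real) \<Rightarrow> (nat \<Rightarrow> real)"
    and kstar vstar :: "real^'d"
  assumes Lbar: "Lbar \<ge> 1"
    and PL: "set_pmf PL \<subseteq> {1..Lbar}"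
    and Delta: "\<Delta> \<ge> 0"
    and g_meas: "\<And>L eps. L \<in> {1..Lbar} \<Longrightarrow> eps \<in> {1..L} \<Longrightarrow>
        g L eps \<in> borel_measurable (PiM {1..L} (\<lambda>_. lborel))"
    and g_nonneg: "\<And>L eps z. L \<in> {1..Lbar} \<Longrightarrow> eps \<in> {1..L} \<Longrightarrow>
        z \<in> space (PiM {1..L} (\<lambda>_. (lborel :: real measure))) \<Longrightarrow> g L eps z \<ge> 0"
    and g_dens: "\<And>L eps. L \<in> {1..Lbar} \<Longrightarrow> eps \<in> {1..L} \<Longrightarrow>
        (\<integral>\<^sup>+ X. ennreal (dens_X g kstar L eps X)
           \<partial>(PiM {1..L} (\<lambda>_. (lborel :: (real^'d) measure)))) = 1"
    and \<sigma>_meas: "\<And>L l. L \<in> {1..Lbar} \<Longrightarrow> l \<in> {1..L} \<Longrightarrow>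
        (\<lambda>z. \<sigma> L z l) \<in> borel_measurable (PiM {1..L} (\<lambda>_. lborel))"
    and finite: "\<And>k v. risk PL g \<sigma> \<Delta> kstar vstar k v < \<infinity>"
  shows "\<exists>Et :: real \<Rightarrow> real \<Rightarrow> real \<Rightarrow> real \<Rightarrow> real \<Rightarrow> real \<Rightarrow> real \<Rightarrow> real.
    \<forall>k v :: real^'d.
      enn2real (risk PL g \<sigma> \<Delta> kstar vstar k v) =
      Et ((k \<bullet> kstar) / real CARD('d)) ((v \<bullet> vstar) / real CARD('d))
         ((k \<bullet> vstar) / real CARD('d)) ((v \<bullet> kstar) / real CARD('d))
         ((k \<bullet> k) / real CARD('d)) ((v \<bullet> v) / real CARD('d))
         ((k \<bullet> v) / real CARD('d))"
proof -
  define qs where "qs = (\<lambda>(k::real^'d) (v::real^'d). ((k \<bullet> kstar) / real CARD('d), (v \<bullet> vstar) / real CARD('d),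
         (k \<bullet> vstar) / real CARD('d), (v \<bullet> kstar) / real CARD('d),
         (k \<bullet> k) / real CARD('d), (v \<bullet> v) / real CARD('d), (k \<bullet> v) / real CARD('d)))"
  define Et where "Et = (\<lambda>a b c d e f h. enn2real (risk PL g \<sigma> \<Delta> kstar vstar
      (fst (SOME p. qs (fst p) (snd p) = (a, b, c, d, e, f, h)))
      (snd (SOME p. qs (fst p) (snd p) = (a, b, c, d, e, f, h)))))"
  have Dpos: "real CARD('d) \<noteq> 0" by simp
  show ?thesis
  proof (intro exI allI)
    fix k v :: "real^'d"
    define p where "p = (SOME p. qs (fst p) (snd p) = qs k v)"
    have "qs (fst p) (snd p) = qs k v" unfolding p_def by (rule someI[of _ "(k, v)"]) simp
    then have eq: "fst p \<bullet> kstar = k \<bullet> kstar" "snd p \<bullet> vstar = v \<bullet> vstar" "fst p \<bullet> vstar = k \<bullet> vstar"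
      "snd p \<bullet> kstar = v \<bullet> kstar" "fst p \<bullet> fst p = k \<bullet> k" "snd p \<bullet> snd p = v \<bullet> v" "fst p \<bullet> snd p = k \<bullet> v"
      using Dpos by (auto simp: qs_def)
    obtain Q where Q: "orthogonal_transformation Q" "Q kstar = kstar" "Q vstar = vstar" "Q (fst p) = k" "Q (snd p) = v"
      using exists_Q[OF eq(1) eq(3) eq(4) eq(2) eq(5) eq(6) eq(7)] by blast
    have "risk PL g \<sigma> \<Delta> kstar vstar k v = risk PL g \<sigma> \<Delta> kstar vstar (fst p) (snd p)"
      using risk_invariant[where k="fst p" and v="snd p" and \<Delta>=\<Delta>, OF PL g_meas \<sigma>_meas Q(1-3)] Q(4,5) by simp
    moreover have "Et ((k \<bullet> kstar) / real CARD('d)) ((v \<bullet> vstar) / real CARD('d))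
         ((k \<bullet> vstar) / real CARD('d)) ((v \<bullet> kstar) / real CARD('d))
         ((k \<bullet> k) / real CARD('d)) ((v \<bullet> v) / real CARD('d))
         ((k \<bullet> v) / real CARD('d)) = enn2real (risk PL g \<sigma> \<Delta> kstar vstar (fst p) (snd p))"
      unfolding Et_def p_def by (simp add: qs_def)
    ultimately show "enn2real (risk PL g \<sigma> \<Delta> kstar vstar k v) = Et ((k \<bullet> kstar) / real CARD('d)) ((v \<bullet> vstar) / real CARD('d))
         ((k \<bullet> vstar) / real CARD('d)) ((v \<bullet> kstar) / real CARD('d))
         ((k \<bullet> k) / real CARD('d)) ((v \<bullet> v) / real CARD('d))
         ((k \<bullet> v) / real CARD('d))" by simp
  qed
qed


end
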